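(* Let $S$ be a finite set of agents, $p>0$ a price and $k$ a positive integer. Let $(x,\tilde x)$ be the pair returned by $\mathrm{Indiv\_Alloc}(S,p,k)$ and let $x'$ be the allocation returned by $\mathrm{Div\_Alloc}(S,p,k)$. Then $$\mathbb{E}\Big[\sum_{i\in S}\tilde x_i\Big]\ \ge\ \frac12\sum_{i\in S} x'_i,$$ where the expectation is over the internal randomness of $\mathrm{Indiv\_Alloc}$ (and, if relevant, of $\mathrm{Div\_Alloc}$).
   Context: Each agent $i$ has a value $v_i\ge 0$ and a budget $b_i\ge 0$. The procedure $\mathrm{Div\_Alloc}(S,p,k)$: set $k'\gets k$, $x_i\gets 0$ for all $i\in S$; draw a uniformly random permutation $\pi$ of $S$; for $t=1,\dots,|S|$, if $v_{\pi(t)}\ge p$ set $x_{\pi(t)}\gets\min\{b_{\pi(t)}/p,k'\}$ and $k'\gets k'-x_{\pi(t)}$; return $x$. (Note $\sum_i x_i=\min\{\sum_{i\in S: v_i\ge p} b_i/p,\ k\}$.) The procedure $\mathrm{Indiv\_Alloc}(S,p,k)$: draw a uniformly random permutation $\pi$ of $S$; set $k'\gets k$, $x_i\gets 0$, $\tilde x_i\gets 0$ for all $i\in S$; for $t=1,\dots,|S|$, with $i=\pi(t)$: if $v_i\ge p$, then (a) if $k'\le b_i/p$, set $x_i\gets k'$ and $\tilde x_i\gets k'$; (b) otherwise set $\tilde x_i\gets b_i/p$ and set $x_i\gets\lceil b_i/p\rceil$ with probability $b_i/p-\lfloor b_i/p\rfloor$ and $x_i\gets\lfloor b_i/p\rfloor$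 otherwise (independently of everything else); then set $k'\gets k'-x_i$. Return $(x,\tilde x)$. Here $x$ is the (integral) allocation and $\tilde x$ is the quantity the agent is charged for. *)

theory Defs
  imports "HOL-Probability.Probability" "HOL-Combinatorics.Multiset_Permutations"
begin

text \<open>Agents have type 'a; values v and budgets b are functions on agents.
  A uniformly random permutation of S is a uniformly random distinct list
  enumerating S. Allocations are functions 'a => real (zero outside the processed agents).\<close>

text \<open>Div_Alloc: state is (remaining supply k', allocation x).\<close>
definition div_step :: "('a \<Rightarrow> real) \<Rightarrow> ('a \<Rightarrow> real) \<Rightarrow> real \<Rightarrow> 'a
    \<Rightarrow> real \<times> ('a \<Rightarrow> real) \<Rightarrow> real \<times> ('a \<Rightarrow> real)" where
  "div_step v b p i st =
     (if v i \<ge> p then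
        (let a = min (b i / p) (fst st) in (fst st - a, (snd st)(i := a)))
      else st)"

definition Div_Alloc :: "('a \<Rightarrow> real) \<Rightarrow> ('a \<Rightarrow> real) \<Rightarrow> 'a set \<Rightarrow> real \<Rightarrow> nat
    \<Rightarrow> ('a \<Rightarrow> real) pmf" where
  "Div_Alloc v b S p k =
     map_pmf (\<lambda>\<pi>. snd (foldl (\<lambda>st i. div_step v b p i st) (real k, \<lambda>_. 0) \<pi>))
             (pmf_of_set (permutations_of_set S))"

text \<open>Indiv_Alloc: state is (remaining supply k', allocation x, charged quantity xt).\<close>
definition indiv_step :: "('a \<Rightarrow> real) \<Rightarrow> ('a \<Rightarrow> real) \<Rightarrow> real \<Rightarrow> 'a
    \<Rightarrow> real \<times> ('a \<Rightarrow> real) \<times> ('a \<Rightarrow> real)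
    \<Rightarrow> (real \<times> ('a \<Rightarrow> real) \<times> ('a \<Rightarrow> real)) pmf" where
  "indiv_step v b p i st =
     (let k' = fst st; x = fst (snd st); xt = snd (snd st) in
      if v i \<ge> p then
        (if k' \<le> b i / p then return_pmf (k' - k', x(i := k'), xt(i := k'))
         else map_pmf
           (\<lambda>c. let xi = (if c then of_int \<lceil>b i / p\<rceil> else of_int \<lfloor>b i / p\<rfloor>)
                 in (k' - xi, x(i := xi), xt(i := b i / p)))
           (bernoulli_pmf (b i / p - of_int \<lfloor>b i / p\<rfloor>)))
      else return_pmf st)"

definition Indiv_Alloc :: "('a \<Rightarrow> real) \<Rightarrow> ('a \<Rightarrow> real) \<Rightarrow> 'a set \<Rightarrow> real \<Rightarrow> nat
    \<Rightarrow> (('a \<Rightarrow> real) \<times> ('a \<Rightarrow> real)) pmf" where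
  "Indiv_Alloc v b S p k =
     pmf_of_set (permutations_of_set S) \<bind>
       (\<lambda>\<pi>. map_pmf snd
               (foldl (\<lambda>M i. M \<bind> indiv_step v b p i)
                      (return_pmf (real k, \<lambda>_. 0, \<lambda>_. 0)) \<pi>))"

end

theory Submission
  imports Defs
begin

definition RR :: "('a \<Rightarrow> real) \<Rightarrow> ('a \<Rightarrow> real) \<Rightarrow> real \<Rightarrow> 'a list \<Rightarrow> real" where
  "RR v b p \<pi> = sum_list (map (\<lambda>i. if p \<le> v i then b i / p else 0) \<pi>)"

lemma RR_Cons: "RR v b p (i # \<pi>) = (if p \<le> v i then b i / p else 0) + RR v b p \<pi>"
  by (simp add: RR_def)

lemma RR_nonneg: "p > 0 \<Longrightarrow> set \<pi> \<subseteq> S \<Longrightarrow> \<forall>i\<in>S. b i \<ge> 0 \<Longrightarrow> RR v b p \<pi> \<ge> 0"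
  unfolding RR_def by (induction \<pi>) auto

lemma sum_upd0:
  assumes "finite S" "i \<in> S" "f i = 0"
  shows "(\<Sum>j\<in>S. (f(i := c)) j) = c + (\<Sum>j\<in>S. f j)"
proof -
  have "(\<Sum>j\<in>S. (f(i := c)) j) = (f(i:=c)) i + (\<Sum>j\<in>S-{i}. (f(i := c)) j)"
    using assms by (simp add: sum.remove)
  also have "(\<Sum>j\<in>S-{i}. (f(i := c)) j) = (\<Sum>j\<in>S-{i}. f j)" by (rule sum.cong) auto
  also have "\<dots> = (\<Sum>j\<in>S. f j)" using assms by (simp add: sum.remove)
  finally show ?thesis by simp
qed

lemma exp_bind_fin:
  fixes h :: "'b \<Rightarrow> real"
  assumes "finite (set_pmf M)" "\<And>x. x \<in> set_pmf M \<Longrightarrow> finite (set_pmf (f x))"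
  shows "measure_pmf.expectation (M \<bind> f) h = measure_pmf.expectation M (\<lambda>x. measure_pmf.expectation (f x) h)"
  using assms by (simp add: pmf_expectation_bind[of "set_pmf M"] integral_measure_pmf[of "set_pmf M"])

lemma exp_mono_fin:
  fixes f g :: "'b \<Rightarrow> real"
  assumes "finite (set_pmf M)" "\<And>x. x \<in> set_pmf M \<Longrightarrow> f x \<le> g x"
  shows "measure_pmf.expectation M f \<le> measure_pmf.expectation M g"
  using assms by (intro integral_mono_AE integrable_measure_pmf_finite) (auto simp: AE_measure_pmf_iff)

definition goodI :: "'a list \<Rightarrow> real \<times> ('a \<Rightarrow> real) \<times> ('a \<Rightarrow> real) \<Rightarrow> bool" where
  "goodI \<pi> st = (fst st \<in> \<int> \<and> fst st \<ge> 0 \<and> (\<forall>j\<in>set \<pi>. snd (snd st) j = 0))"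

lemma indiv_step_fin: "finite (set_pmf (indiv_step v b p i st))"
  unfolding indiv_step_def Let_def by auto

lemma cf_avg:
  fixes c :: real
  shows "(c - of_int \<lfloor>c\<rfloor>) * of_int \<lceil>c\<rceil> + (1 - (c - of_int \<lfloor>c\<rfloor>)) * of_int \<lfloor>c\<rfloor> = c"
proof (cases "c = of_int \<lfloor>c\<rfloor>")
  case True then show ?thesis by simp
next
  case False
  then have "\<lceil>c\<rceil> = \<lfloor>c\<rfloor> + 1"
    by (metis ceiling_altdef)
  then show ?thesis by (simp add: algebra_simps)
qed

lemma indiv_step_good:
  assumes "p > 0" "\<forall>i\<in>S. b i \<ge> 0" "i \<notin> set \<pi>" "goodI (i#\<pi>) (k', x, xt)"
    "st' \<in> set_pmf (indiv_step v b p i (k', x, xt))"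
  shows "goodI \<pi> st'"
proof -
  from assms(4) obtain m where m: "k' = of_int m" "m \<ge> 0" and z: "\<forall>j\<in>set \<pi>. xt j = 0"
    unfolding goodI_def by (auto elim!: Ints_cases)
  show ?thesis
  proof (cases "p \<le> v i")
    case False then show ?thesis using assms(5) assms(4) unfolding indiv_step_def goodI_def by auto
  next
    case el: True
    show ?thesis
    proof (cases "k' \<le> b i / p")
      case True then show ?thesis using assms(5) el z assms(3) unfolding indiv_step_def goodI_def by auto
    next
      case False
      then have "\<lceil>b i / p\<rceil> \<le> m" using m by (simp add: ceiling_le_iff)
      moreover have "\<lfloor>b i / p\<rfloor> \<le> \<lceil>b i / p\<rceil>" by (meson floor_le_ceiling)
      ultimately have "\<lfloor>b i / p\<rfloor> \<le> m" by linarith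
      with \<open>\<lceil>b i / p\<rceil> \<le> m\<close> show ?thesis using assms(5) el z assms(3) False m unfolding indiv_step_def goodI_def
        by (auto simp: Let_def)
    qed
  qed
qed


lemma key_b:
  fixes q C F c R k' T :: real
  assumes "0 \<le> q" "q \<le> 1" "q * C + (1 - q) * F = c" "C \<ge> 0" "F \<ge> 0"
  shows "(T + c + 1/2 * min R (k' - C)) * q + (T + c + 1/2 * min R (k' - F)) * (1 - q)
         \<ge> T + 1/2 * min (c + R) k'"
proof -
  have a: "min R (k' - C) \<ge> min R k' - C" "min R (k' - F) \<ge> min R k' - F" using assms by auto
  have b: "q * min R (k' - C) \<ge> q * (min R k' - C)" using a assms by (intro mult_left_mono) auto
  have c: "(1-q) * min R (k' - F) \<ge> (1-q) * (min R k' - F)" using a assms by (intro mult_left_mono) auto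
  have "q * C \<ge> 0" "(1-q) * F \<ge> 0" using assms by auto
  then have "c \<ge> 0" using assms(3) by linarith
  then have d: "min (c + R) k' \<le> c + min R k'" by auto
  have e: "q * (min R k' - C) + (1-q) * (min R k' - F) \<le> q * min R (k' - C) + (1-q) * min R (k' - F)"
    using b c by linarith
  have f: "q * (min R k' - C) + (1-q) * (min R k' - F) = min R k' - c" using assms(3) by (simp add: algebra_simps)
  have eq: "(T + c + 1/2 * min R (k' - C)) * q + (T + c + 1/2 * min R (k' - F)) * (1 - q)
      = T + c + 1/2 * (q * min R (k' - C) + (1-q) * min R (k' - F))" by (simp add: field_simps)
  have g: "T + c + 1/2 * (q * min R (k' - C) + (1-q) * min R (k' - F)) \<ge> T + c + 1/2 * (min R k' - c)"
    using e f by simp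
  obtain Y where Y: "Y = q * min R (k' - C) + (1-q) * min R (k' - F)" by blast
  obtain M N where MN: "M = min R k'" "N = min (c + R) k'" by blast
  have "T + c + 1/2 * (M - c) \<le> T + c + 1/2 * Y" "N \<le> c + M" using g d Y MN by simp_all
  then have "T + 1/2 * N \<le> T + c + 1/2 * Y" by argo
  then show ?thesis unfolding eq Y MN .
qed

lemma indiv_step_exp:
  assumes "p > 0" "\<forall>i\<in>S. b i \<ge> 0" "finite S" "i \<in> S" "set \<pi> \<subseteq> S" "goodI (i#\<pi>) (k', x, xt)"
  shows "(\<Sum>j\<in>S. xt j) + 1/2 * min (RR v b p (i#\<pi>)) k'
    \<le> measure_pmf.expectation (indiv_step v b p i (k', x, xt))
         (\<lambda>st. (\<Sum>j\<in>S. snd (snd st) j) + 1/2 * min (RR v b p \<pi>) (fst st))"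
proof -
  have xi: "xt i = 0" and k0: "k' \<ge> 0" using assms(6) unfolding goodI_def by auto
  have R0: "RR v b p \<pi> \<ge> 0" using RR_nonneg[OF assms(1) assms(5) assms(2)] .
  have bi: "b i / p \<ge> 0" using assms by auto
  define T where "T = (\<Sum>j\<in>S. xt j)"
  have upd: "\<And>c. (\<Sum>j\<in>S. (xt(i := c)) j) = c + T" unfolding T_def using sum_upd0[of S i xt, OF assms(3) assms(4) xi] .
  have upd2: "\<And>c. (\<Sum>j\<in>S. if j = i then c else xt j) = c + T" using upd by (simp add: fun_upd_def)
  show ?thesis
  proof (cases "p \<le> v i")
    case False then show ?thesis by (simp add: indiv_step_def RR_Cons)
  next
    case el: True
    show ?thesis
    proof (cases "k' \<le> b i / p")
      case True then show ?thesis using el upd R0 k0 by (simp add: indiv_step_def RR_Cons T_def[symmetric])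
    next
      case False
      define c where "c = b i / p"
      define q where "q = c - of_int \<lfloor>c\<rfloor>"
      have q0: "0 \<le> q" "q \<le> 1" unfolding q_def by linarith+
      have F0: "real_of_int \<lfloor>c\<rfloor> \<ge> 0" "real_of_int \<lceil>c\<rceil> \<ge> 0" using bi c_def by auto
      have avg: "q * of_int \<lceil>c\<rceil> + (1 - q) * of_int \<lfloor>c\<rfloor> = c" unfolding q_def by (rule cf_avg)
      have "measure_pmf.expectation (indiv_step v b p i (k', x, xt))
         (\<lambda>st. (\<Sum>j\<in>S. snd (snd st) j) + 1/2 * min (RR v b p \<pi>) (fst st))
        = (T + c + 1/2 * min (RR v b p \<pi>) (k' - of_int \<lceil>c\<rceil>)) * q
          + (T + c + 1/2 * min (RR v b p \<pi>) (k' - of_int \<lfloor>c\<rfloor>)) * (1 - q)"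
        using el False q0 unfolding indiv_step_def Let_def c_def[symmetric] q_def[symmetric]
        by (simp add: upd upd2 add_ac)
      also have "\<dots> \<ge> T + 1/2 * min (c + RR v b p \<pi>) k'"
        by (rule key_b[OF q0 avg F0(2) F0(1)])
      finally show ?thesis using el by (simp add: RR_Cons T_def c_def)
    qed
  qed
qed


lemma indiv_main:
  assumes "p > 0" "\<forall>i\<in>S. b i \<ge> 0" "finite S"
  shows "distinct \<pi> \<Longrightarrow> set \<pi> \<subseteq> S \<Longrightarrow> finite (set_pmf M) \<Longrightarrow> (\<forall>st\<in>set_pmf M. goodI \<pi> st) \<Longrightarrow>
    measure_pmf.expectation M (\<lambda>st. (\<Sum>j\<in>S. snd (snd st) j) + 1/2 * min (RR v b p \<pi>) (fst st))
    \<le> measure_pmf.expectation (foldl (\<lambda>M i. M \<bind> indiv_step v b p i) M \<pi>) (\<lambda>st. \<Sum>j\<in>S. snd (snd st) j)"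
proof (induction \<pi> arbitrary: M)
  case Nil
  have *: "\<And>st. st \<in> set_pmf M \<Longrightarrow> min (RR v b p []) (fst st) = 0"
    using Nil by (auto simp: RR_def goodI_def)
  show ?case unfolding foldl_Nil by (rule exp_mono_fin[OF Nil(3)]) (use * in auto)
next
  case (Cons i \<pi>)
  define M' where "M' = M \<bind> indiv_step v b p i"
  have fin: "finite (set_pmf M')" unfolding M'_def using Cons.prems(3)
    by (simp add: indiv_step_fin)
  have good: "\<forall>st\<in>set_pmf M'. goodI \<pi> st"
  proof
    fix st' assume "st' \<in> set_pmf M'"
    then obtain st where st: "st \<in> set_pmf M" "st' \<in> set_pmf (indiv_step v b p i st)"
      unfolding M'_def by auto
    obtain k' x xt where "st = (k', x, xt)" by (cases st) auto
    then show "goodI \<pi> st'" using st Cons.prems(1,4) assms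
      by (intro indiv_step_good[of p S b i \<pi> k' x xt]) auto
  qed
  have IH: "measure_pmf.expectation M' (\<lambda>st. (\<Sum>j\<in>S. snd (snd st) j) + 1/2 * min (RR v b p \<pi>) (fst st))
    \<le> measure_pmf.expectation (foldl (\<lambda>M i. M \<bind> indiv_step v b p i) M' \<pi>) (\<lambda>st. \<Sum>j\<in>S. snd (snd st) j)"
    using Cons.IH[OF _ _ fin good] Cons.prems by auto
  have "measure_pmf.expectation M' (\<lambda>st. (\<Sum>j\<in>S. snd (snd st) j) + 1/2 * min (RR v b p \<pi>) (fst st))
     = measure_pmf.expectation M (\<lambda>st. measure_pmf.expectation (indiv_step v b p i st)
          (\<lambda>st. (\<Sum>j\<in>S. snd (snd st) j) + 1/2 * min (RR v b p \<pi>) (fst st)))"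
    unfolding M'_def using Cons.prems(3) by (intro exp_bind_fin) (auto simp: indiv_step_fin)
  also have "\<dots> \<ge> measure_pmf.expectation M (\<lambda>st. (\<Sum>j\<in>S. snd (snd st) j) + 1/2 * min (RR v b p (i#\<pi>)) (fst st))"
  proof (rule exp_mono_fin[OF Cons.prems(3)])
    fix st assume st: "st \<in> set_pmf M"
    obtain k' x xt where "st = (k', x, xt)" by (cases st) auto
    then show "(\<Sum>j\<in>S. snd (snd st) j) + 1/2 * min (RR v b p (i#\<pi>)) (fst st)
      \<le> measure_pmf.expectation (indiv_step v b p i st)
          (\<lambda>st. (\<Sum>j\<in>S. snd (snd st) j) + 1/2 * min (RR v b p \<pi>) (fst st))"
      using indiv_step_exp[OF assms(1,2,3), of i \<pi> k' x xt v] st Cons.prems by auto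
  qed
  finally show ?case using IH by (simp add: M'_def)
qed


lemma fold_fin: "finite (set_pmf M) \<Longrightarrow> finite (set_pmf (foldl (\<lambda>M i. M \<bind> indiv_step v b p i) M \<pi>))"
  by (induction \<pi> arbitrary: M) (auto simp: indiv_step_fin)

lemma div_main:
  assumes "p > 0" "\<forall>i\<in>S. b i \<ge> 0" "finite S"
  shows "distinct \<pi> \<Longrightarrow> set \<pi> \<subseteq> S \<Longrightarrow> k' \<ge> 0 \<Longrightarrow> (\<forall>j\<in>set \<pi>. x j = 0) \<Longrightarrow>
    (\<Sum>j\<in>S. snd (foldl (\<lambda>st i. div_step v b p i st) (k', x) \<pi>) j) \<le> (\<Sum>j\<in>S. x j) + min (RR v b p \<pi>) k'"
proof (induction \<pi> arbitrary: k' x)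
  case Nil then show ?case by (simp add: RR_def)
next
  case (Cons i \<pi>)
  have R0: "RR v b p \<pi> \<ge> 0" using RR_nonneg[OF assms(1) _ assms(2)] Cons.prems by auto
  show ?case
  proof (cases "p \<le> v i")
    case False
    then show ?thesis using Cons.IH[of k' x] Cons.prems by (simp add: div_step_def RR_Cons)
  next
    case True
    define a where "a = min (b i / p) k'"
    have a0: "a \<ge> 0" "a \<le> b i / p" "a \<le> k'" using assms Cons.prems unfolding a_def by auto
    have st: "div_step v b p i (k', x) = (k' - a, x(i := a))" using True by (simp add: div_step_def a_def Let_def)
    have A1: "(\<Sum>j\<in>S. snd (foldl (\<lambda>st i. div_step v b p i st) (k' - a, x(i := a)) \<pi>) j)
        \<le> (\<Sum>j\<in>S. (x(i := a)) j) + min (RR v b p \<pi>) (k' - a)"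
    proof -
      have z: "\<forall>j\<in>set \<pi>. (x(i := a)) j = 0" "k' - a \<ge> 0" "distinct \<pi>" "set \<pi> \<subseteq> S"
        using Cons.prems a0 by auto
      show ?thesis using Cons.IH[OF z(3) z(4) z(2) z(1)] .
    qed
    have A2: "(\<Sum>j\<in>S. (x(i := a)) j) = a + (\<Sum>j\<in>S. x j)"
      using sum_upd0[of S i x a] assms(3) Cons.prems by auto
    have B: "a + min (RR v b p \<pi>) (k'-a) \<le> min (b i/p + RR v b p \<pi>) k'" using a0 by auto
    have RRc: "RR v b p (i#\<pi>) = b i/p + RR v b p \<pi>" by (simp add: RR_Cons True)
    show ?thesis unfolding foldl_Cons st RRc using A1 A2 B by linarith
  qed
qed

theorem lemma1:
  fixes v b :: "'a \<Rightarrow> real" and S :: "'a set" and p :: real and k :: nat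
  assumes "finite S"
    and "\<forall>i\<in>S. v i \<ge> 0" and "\<forall>i\<in>S. b i \<ge> 0"
    and "p > 0" and "k > 0"
  shows "measure_pmf.expectation (Indiv_Alloc v b S p k) (\<lambda>(x, xt). \<Sum>i\<in>S. xt i)
           \<ge> 1 / 2 * measure_pmf.expectation (Div_Alloc v b S p k) (\<lambda>x'. \<Sum>i\<in>S. x' i)"
proof -
  define P where "P = permutations_of_set S"
  have Pf: "finite P" "P \<noteq> {}" using assms(1) unfolding P_def by auto
  define F where "F = (\<lambda>\<pi>. foldl (\<lambda>M i. M \<bind> indiv_step v b p i) (return_pmf (real k, \<lambda>_. 0, \<lambda>_. 0)) \<pi>)"
  define G where "G = (\<lambda>\<pi>. snd (foldl (\<lambda>st i. div_step v b p i st) (real k, \<lambda>_. 0) \<pi>))"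
  have I: "measure_pmf.expectation (Indiv_Alloc v b S p k) (\<lambda>(x, xt). \<Sum>i\<in>S. xt i)
     = (\<Sum>\<pi>\<in>P. measure_pmf.expectation (F \<pi>) (\<lambda>st. \<Sum>j\<in>S. snd (snd st) j) / real (card P))"
    unfolding Indiv_Alloc_def P_def[symmetric] F_def[symmetric]
    using Pf by (subst pmf_expectation_bind_pmf_of_set) (auto simp: F_def fold_fin case_prod_beta field_simps)
  have D: "measure_pmf.expectation (Div_Alloc v b S p k) (\<lambda>x'. \<Sum>i\<in>S. x' i)
     = (\<Sum>\<pi>\<in>P. (\<Sum>j\<in>S. G \<pi> j)) / real (card P)"
    unfolding Div_Alloc_def P_def[symmetric] G_def[symmetric]
    using Pf by (simp add: integral_pmf_of_set)
  have pw: "1/2 * (\<Sum>j\<in>S. G \<pi> j) \<le> measure_pmf.expectation (F \<pi>) (\<lambda>st. \<Sum>j\<in>S. snd (snd st) j)"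
    if "\<pi> \<in> P" for \<pi>
  proof -
    have \<pi>: "distinct \<pi>" "set \<pi> \<subseteq> S" using that permutations_of_setD[of \<pi> S] unfolding P_def by auto
    have "(\<Sum>j\<in>S. G \<pi> j) \<le> (\<Sum>j\<in>S. (0::real)) + min (RR v b p \<pi>) (real k)"
      unfolding G_def using div_main[OF assms(4) assms(3) assms(1) \<pi>, of "real k" "\<lambda>_. 0" v] by auto
    moreover have "measure_pmf.expectation (return_pmf (real k, \<lambda>_. 0, \<lambda>_. 0))
        (\<lambda>st. (\<Sum>j\<in>S. snd (snd st) j) + 1/2 * min (RR v b p \<pi>) (fst st))
      \<le> measure_pmf.expectation (F \<pi>) (\<lambda>st. \<Sum>j\<in>S. snd (snd st) j)"
      unfolding F_def using indiv_main[where M="return_pmf (real k, \<lambda>_. 0, \<lambda>_. 0)", OF assms(4) assms(3) assms(1) \<pi>] by (simp add: goodI_def)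
    ultimately show ?thesis by (simp add: min_def split: if_splits)
  qed
  have "1/2 * measure_pmf.expectation (Div_Alloc v b S p k) (\<lambda>x'. \<Sum>i\<in>S. x' i)
      = (\<Sum>\<pi>\<in>P. 1/2 * (\<Sum>j\<in>S. G \<pi> j) / real (card P))"
    unfolding D by (simp add: sum_divide_distrib sum_distrib_left)
  also have "\<dots> \<le> (\<Sum>\<pi>\<in>P. measure_pmf.expectation (F \<pi>) (\<lambda>st. \<Sum>j\<in>S. snd (snd st) j) / real (card P))"
    by (intro sum_mono divide_right_mono pw) auto
  finally show ?thesis unfolding I .
qed

end
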